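(* If $G$ is a geometric strongly regular graph, then $G$ is integrable.
   Context: A strongly regular graph with parameters $(v,k,\lambda,\mu)$ is a $k$-regular graph on $v$ vertices in which adjacent vertices have $\lambda$ common neighbours and distinct nonadjacent vertices have $\mu$ common neighbours. Let $\theta_{\min}(G)$ be the smallest eigenvalue of the adjacency matrix $A(G)$. Every clique of $G$ has at most $1-\frac{k}{\theta_{\min}(G)}$ vertices; a clique with exactly this many vertices is called a Delsarte clique. $G$ is geometric if there is a set $\mathcal{C}$ of Delsarte cliques of $G$ such that every pair of adjacent vertices lies in exactly one clique of $\mathcal{C}$. A graph $G$ is integrable if there is an integral matrix $N$ with $A(G)-\lfloor\theta_{\min}(G)\rfloor I=N^TN$. *)

theory Defs
  imports "Jordan_Normal_Form.Char_Poly"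
begin

text \<open>A finite simple graph on the vertex set {0..<n}, given by a symmetric
irreflexive adjacency relation E (only its restriction to {0..<n} matters).\<close>

definition simple_graph :: "nat \<Rightarrow> (nat \<Rightarrow> nat \<Rightarrow> bool) \<Rightarrow> bool" where
  "simple_graph n E \<longleftrightarrow> (\<forall>u<n. \<not> E u u) \<and> (\<forall>u<n. \<forall>v<n. E u v \<longrightarrow> E v u)"

definition nbhd :: "nat \<Rightarrow> (nat \<Rightarrow> nat \<Rightarrow> bool) \<Rightarrow> nat \<Rightarrow> nat set" where
  "nbhd n E u = {w. w < n \<and> E u w}"

definition strongly_regular ::
  "nat \<Rightarrow> (nat \<Rightarrow> nat \<Rightarrow> bool) \<Rightarrow> nat \<Rightarrow> nat \<Rightarrow> nat \<Rightarrow> nat \<Rightarrow> bool" where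
  "strongly_regular n E v k lam mu \<longleftrightarrow>
     simple_graph n E \<and> n = v \<and>
     (\<forall>u<n. card (nbhd n E u) = k) \<and>
     (\<forall>u<n. \<forall>w<n. E u w \<longrightarrow> card (nbhd n E u \<inter> nbhd n E w) = lam) \<and>
     (\<forall>u<n. \<forall>w<n. u \<noteq> w \<and> \<not> E u w \<longrightarrow> card (nbhd n E u \<inter> nbhd n E w) = mu)"

definition adj_mat :: "nat \<Rightarrow> (nat \<Rightarrow> nat \<Rightarrow> bool) \<Rightarrow> 'a :: {zero,one} mat" where
  "adj_mat n E = mat n n (\<lambda>(i, j). if E i j then 1 else 0)"

definition theta_min :: "nat \<Rightarrow> (nat \<Rightarrow> nat \<Rightarrow> bool) \<Rightarrow> real" where
  "theta_min n E = Min {t. eigenvalue (adj_mat n E :: real mat) t}"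

definition is_clique :: "nat \<Rightarrow> (nat \<Rightarrow> nat \<Rightarrow> bool) \<Rightarrow> nat set \<Rightarrow> bool" where
  "is_clique n E C \<longleftrightarrow> C \<subseteq> {..<n} \<and> (\<forall>u\<in>C. \<forall>w\<in>C. u \<noteq> w \<longrightarrow> E u w)"

definition delsarte_clique :: "nat \<Rightarrow> (nat \<Rightarrow> nat \<Rightarrow> bool) \<Rightarrow> nat \<Rightarrow> nat set \<Rightarrow> bool" where
  "delsarte_clique n E k C \<longleftrightarrow>
     is_clique n E C \<and> real (card C) = 1 - real k / theta_min n E"

definition geometric :: "nat \<Rightarrow> (nat \<Rightarrow> nat \<Rightarrow> bool) \<Rightarrow> nat \<Rightarrow> bool" where
  "geometric n E k \<longleftrightarrow>
     (\<exists>\<C>. (\<forall>C\<in>\<C>. delsarte_clique n E k C) \<and>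
          (\<forall>u<n. \<forall>w<n. E u w \<longrightarrow> (\<exists>!C. C \<in> \<C> \<and> u \<in> C \<and> w \<in> C)))"

definition integrable :: "nat \<Rightarrow> (nat \<Rightarrow> nat \<Rightarrow> bool) \<Rightarrow> bool" where
  "integrable n E \<longleftrightarrow>
     (\<exists>m. \<exists>N :: int mat. N \<in> carrier_mat m n \<and>
        adj_mat n E - of_int \<lfloor>theta_min n E\<rfloor> \<cdot>\<^sub>m 1\<^sub>m n = transpose_mat N * N)"

end

theory Submission imports Defs begin
lemma tn_entry:
  fixes cs :: "nat set list" and n :: nat
  defines "N \<equiv> mat (length cs) n (\<lambda>(l,j). if j \<in> cs!l then 1 else 0) :: int mat"
  assumes "i < n" "j < n"
  shows "(transpose_mat N * N) $$ (i,j) = int (card {l. l < length cs \<and> i \<in> cs!l \<and> j \<in> cs!l})"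
proof -
  have "(transpose_mat N * N) $$ (i,j) = (\<Sum>l\<in>{0..<length cs}. (if i \<in> cs!l \<and> j \<in> cs!l then 1 else 0))"
    using assms by (auto simp: N_def scalar_prod_def intro!: sum.cong)
  also have "\<dots> = int (card {l. l < length cs \<and> i \<in> cs!l \<and> j \<in> cs!l})"
    by (simp add: sum.If_cases atLeast0LessThan Int_def)
  finally show ?thesis .
qed

lemma card_nth_distinct:
  assumes "distinct cs"
  shows "card {l. l < length cs \<and> P (cs!l)} = card {x \<in> set cs. P x}"
proof -
  have "{x \<in> set cs. P x} = (\<lambda>l. cs!l) ` {l. l < length cs \<and> P (cs!l)}"
    by (auto simp: in_set_conv_nth)
  moreover have "inj_on (\<lambda>l. cs!l) {l. l < length cs \<and> P (cs!l)}"
    using assms by (auto simp: inj_on_def nth_eq_iff_index_eq)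
  ultimately show ?thesis by (simp add: card_image)
qed

lemma theta_zero:
  assumes "n > 0" "adj_mat n E = (0\<^sub>m n n :: real mat)"
  shows "theta_min n E = 0"
proof -
  have "{t. eigenvalue (adj_mat n E :: real mat) t} = {0}"
  proof (safe)
    fix t assume "eigenvalue (adj_mat n E :: real mat) t"
    then obtain v where v: "v \<in> carrier_vec n" "v \<noteq> 0\<^sub>v n" "0\<^sub>m n n *\<^sub>v v = t \<cdot>\<^sub>v v"
      using assms by (auto simp: eigenvalue_def eigenvector_def)
    then obtain i where i: "i < n" "v $ i \<noteq> 0" by (metis eq_vecI carrier_vecD index_zero_vec)
    have "0\<^sub>m n n *\<^sub>v v = 0\<^sub>v n" using v(1) by (auto intro!: eq_vecI simp: scalar_prod_def)
    then have "(t \<cdot>\<^sub>v v) $ i = 0" using v(3) i by simp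
    then have "0 = t * v $ i" using i v by simp
    then show "t = 0" using i by simp
  next
    show "eigenvalue (adj_mat n E :: real mat) 0"
      unfolding eigenvalue_def eigenvector_def using assms
      by (intro exI[of _ "unit_vec n 0"]) (auto simp: unit_vec_def vec_eq_iff)
  qed
  then show ?thesis by (simp add: theta_min_def)
qed
theorem lemma4p2:
  fixes n v k lam mu :: nat and E :: "nat \<Rightarrow> nat \<Rightarrow> bool"
  assumes "strongly_regular n E v k lam mu"
    and "geometric n E k"
  shows "integrable n E"
proof -
  from assms(1) have sg: "\<forall>u<n. \<not> E u u" "\<forall>u<n. \<forall>v<n. E u v \<longrightarrow> E v u"
    and deg: "\<forall>u<n. card (nbhd n E u) = k"
    by (auto simp: strongly_regular_def simple_graph_def)
  from assms(2) obtain CC where Del: "\<forall>C\<in>CC. delsarte_clique n E k C"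
    and U: "\<forall>u<n. \<forall>w<n. E u w \<longrightarrow> (\<exists>!C. C \<in> CC \<and> u \<in> C \<and> w \<in> C)"
    unfolding geometric_def by blast
  show ?thesis
  proof (cases "n = 0")
    case True
    show ?thesis unfolding integrable_def
      by (intro exI[of _ 0] exI[of _ "0\<^sub>m 0 0 :: int mat"]) (auto simp: True adj_mat_def intro!: eq_matI)
  next
    case nz: False
    show ?thesis
    proof (cases "k = 0")
      case True
      have noE: "\<not> E i j" if "i<n" "j<n" for i j
      proof
        assume "E i j" then have "j \<in> nbhd n E i" using that by (simp add: nbhd_def)
        moreover have "finite (nbhd n E i)" by (simp add: nbhd_def)
        ultimately have "card (nbhd n E i) > 0" using card_gt_0_iff by blast
        with deg that True show False by simp
      qed
      have "adj_mat n E = (0\<^sub>m n n :: real mat)" by (auto simp: adj_mat_def noE intro!: eq_matI)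
      then have th: "theta_min n E = 0" using theta_zero nz by blast
      show ?thesis unfolding integrable_def th
        by (intro exI[of _ 0] exI[of _ "0\<^sub>m 0 n :: int mat"])
          (auto simp: adj_mat_def noE scalar_prod_def intro!: eq_matI)
    next
      case kpos: False
      have cliq: "is_clique n E C" if "C \<in> CC" for C
        using Del that by (simp add: delsarte_clique_def)
      have finC: "finite C" if "C \<in> CC" for C
        using cliq[OF that] by (auto simp: is_clique_def intro: finite_subset)
      have "CC \<subseteq> Pow {..<n}" using cliq by (auto simp: is_clique_def)
      then have finCC: "finite CC" by (rule finite_subset) simp
      obtain cs where cs: "set cs = CC" "distinct cs" using finite_distinct_list finCC by blast
      define N where "N = (mat (length cs) n (\<lambda>(l,j). if j \<in> cs!l then 1 else 0) :: int mat)"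
      define s where "s = 1 - real k / theta_min n E"
      have cardC: "real (card C) = s" if "C \<in> CC" for C
        using Del that by (simp add: delsarte_clique_def s_def)
      have cnt: "real (card {C\<in>CC. u \<in> C}) = - theta_min n E" if uu: "u<n" for u
      proof -
        let ?D = "{C\<in>CC. u\<in>C}"
        have finD: "finite ?D" using finCC by simp
        have eqN: "nbhd n E u = (\<Union>C\<in>?D. C - {u})"
        proof (intro equalityI subsetI)
          fix w assume "w \<in> nbhd n E u"
          then have w: "w<n" "E u w" by (auto simp: nbhd_def)
          then obtain C where "C\<in>CC" "u\<in>C" "w\<in>C" using U uu by blast
          moreover have "w \<noteq> u" using sg w uu by auto
          ultimately show "w \<in> (\<Union>C\<in>?D. C - {u})" by blast
        next
          fix w assume "w \<in> (\<Union>C\<in>?D. C - {u})"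
          then obtain C where "C\<in>CC" "u\<in>C" "w\<in>C" "w\<noteq>u" by blast
          then show "w \<in> nbhd n E u" using cliq[of C] by (auto simp: is_clique_def nbhd_def)
        qed
        have disj: "\<forall>C1\<in>?D. \<forall>C2\<in>?D. C1 \<noteq> C2 \<longrightarrow> (C1 - {u}) \<inter> (C2 - {u}) = {}"
        proof (intro ballI impI)
          fix C1 C2 assume C1: "C1 \<in> ?D" and C2: "C2 \<in> ?D" and ne: "C1 \<noteq> C2"
          show "(C1 - {u}) \<inter> (C2 - {u}) = {}"
          proof (rule ccontr)
            assume "(C1 - {u}) \<inter> (C2 - {u}) \<noteq> {}"
            then obtain w where w: "w \<in> C1" "w \<in> C2" "w \<noteq> u" by blast
            have "E u w" "w < n" using cliq[of C1] C1 w by (auto simp: is_clique_def)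
            then show False using U uu C1 C2 w ne by blast
          qed
        qed
        have "card (nbhd n E u) = (\<Sum>C\<in>?D. card (C - {u}))"
          unfolding eqN by (rule card_UN_disjoint) (use finD finC disj in auto)
        then have "real k = (\<Sum>C\<in>?D. real (card (C - {u})))"
          using deg uu by simp
        also have "\<dots> = (\<Sum>C\<in>?D. s - 1)"
        proof (rule sum.cong)
          fix C assume C: "C \<in> ?D"
          then have "card C \<ge> 1" using finC[of C] card_0_eq[of C] by fastforce
          then show "real (card (C - {u})) = s - 1" using C finC[of C] cardC[of C] by auto
        qed simp
        also have "\<dots> = real (card ?D) * (- (real k / theta_min n E))" by (simp add: s_def)
        finally have key: "real k = real (card ?D) * (- (real k / theta_min n E))" .
        have "theta_min n E \<noteq> 0" using key kpos by auto
        then have "real k * theta_min n E = real k * (- real (card ?D))" using key kpos by (simp add: field_simps)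
        then have "theta_min n E = - real (card ?D)" using kpos by (subst (asm) mult_left_cancel) auto
        then show ?thesis by simp
      qed
      define t where "t = card {C\<in>CC. 0 \<in> C}"
      have th: "theta_min n E = - real t" using cnt[of 0] nz by (simp add: t_def)
      have cntt: "card {C\<in>CC. u \<in> C} = t" if "u<n" for u
        using cnt[OF that] th by simp
      have fl: "\<lfloor>theta_min n E\<rfloor> = - int t"
      proof -
        have "theta_min n E = of_int (- int t)" using th by simp
        then show ?thesis by (metis floor_of_int)
      qed
      show ?thesis unfolding integrable_def
      proof (intro exI conjI)
        show "N \<in> carrier_mat (length cs) n" by (simp add: N_def)
        show "adj_mat n E - of_int \<lfloor>theta_min n E\<rfloor> \<cdot>\<^sub>m 1\<^sub>m n = transpose_mat N * N"
        proof (rule eq_matI)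
          fix i j assume i: "i < dim_row (transpose_mat N * N)" and j: "j < dim_col (transpose_mat N * N)"
          then have i': "i < n" and j': "j < n" by (auto simp: N_def)
          have R: "(transpose_mat N * N) $$ (i,j) = int (card {C\<in>CC. i \<in> C \<and> j \<in> C})"
            using tn_entry[OF i' j', of cs] card_nth_distinct[OF cs(2), of "\<lambda>C. i \<in> C \<and> j \<in> C"] cs(1)
            by (simp add: N_def)
          have L: "(adj_mat n E - of_int \<lfloor>theta_min n E\<rfloor> \<cdot>\<^sub>m 1\<^sub>m n) $$ (i,j)
              = (if E i j then 1 else 0) + int t * (if i = j then 1 else 0)"
            using i' j' fl by (simp add: adj_mat_def)
          show "(adj_mat n E - of_int \<lfloor>theta_min n E\<rfloor> \<cdot>\<^sub>m 1\<^sub>m n) $$ (i,j) = (transpose_mat N * N) $$ (i,j)"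
          proof (cases "i = j")
            case True
            then show ?thesis using L R cntt[OF i'] sg i' by simp
          next
            case ne: False
            show ?thesis
            proof (cases "E i j")
              case True
              then obtain C where C: "C \<in> CC" "i \<in> C" "j \<in> C"
                and Cu: "\<And>C'. C' \<in> CC \<and> i \<in> C' \<and> j \<in> C' \<Longrightarrow> C' = C"
                using U i' j' by metis
              have "{C\<in>CC. i \<in> C \<and> j \<in> C} = {C}" using C Cu by blast
              then show ?thesis using L R ne True by simp
            next
              case False
              have "{C\<in>CC. i \<in> C \<and> j \<in> C} = {}"
                using cliq False ne by (auto simp: is_clique_def)
              then have c0: "card {C\<in>CC. i \<in> C \<and> j \<in> C} = 0" by (simp only: card.empty)
              show ?thesis using L R ne False c0 by simp
            qed
          qed
        qed (auto simp: N_def adj_mat_def)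
      qed
    qed
  qed
qed

end
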